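(* Let $\Sigma$ be a fixed finite alphabet and $\phi$ an antimorphic involution on $\Sigma^*$. Deciding whether a given word $w\in\Sigma^*$ contains a pseudo cube (with respect to $\phi$) as a factor can be done in time $O(|w|^2)$.
   Context: A function $\phi:\Sigma^*\to\Sigma^*$ is an antimorphic involution if $\phi(uv)=\phi(v)\phi(u)$ and $\phi(\phi(w))=w$ for all words $u,v,w$. A pseudo cube with respect to $\phi$ is a nonempty word $u_1u_2u_3$ such that for all $1\le i,j\le 3$, either $u_i=u_j$ or $u_i=\phi(u_j)$. A factor is a contiguous subword. *)

theory Defs
  imports Main
begin

definition antimorphic_involution :: "('a list \<Rightarrow> 'a list) \<Rightarrow> bool" where
  "antimorphic_involution \<phi> \<longleftrightarrow>
     (\<forall>u v. \<phi> (u @ v) = \<phi> v @ \<phi> u) \<and> (\<forall>w. \<phi> (\<phi> w) = w)"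

definition pseudo_cube :: "('a list \<Rightarrow> 'a list) \<Rightarrow> 'a list \<Rightarrow> bool" where
  "pseudo_cube \<phi> x \<longleftrightarrow> x \<noteq> [] \<and>
     (\<exists>u :: nat \<Rightarrow> 'a list. x = u 1 @ u 2 @ u 3 \<and>
        (\<forall>i\<in>{1,2,3}. \<forall>j\<in>{1,2,3}. u i = u j \<or> u i = \<phi> (u j)))"

definition is_factor :: "'a list \<Rightarrow> 'a list \<Rightarrow> bool" where
  "is_factor x w \<longleftrightarrow> (\<exists>p s. w = p @ x @ s)"

definition contains_pseudo_cube :: "('a list \<Rightarrow> 'a list) \<Rightarrow> 'a list \<Rightarrow> bool" where
  "contains_pseudo_cube \<phi> w \<longleftrightarrow> (\<exists>x. is_factor x w \<and> pseudo_cube \<phi> x)"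

text \<open>Memory is a single array of natural-number cells (registers = memory cells),
  addressed by naturals; every instruction costs one step.\<close>

datatype instr =
    Const nat nat
  | Add nat nat nat
  | Sub nat nat nat          (* mem[r] := mem[a] - mem[b]  (truncated) *)
  | Load nat nat
  | Store nat nat
  | Jz nat nat
  | Jmp nat
  | Halt

type_synonym config = "nat \<times> (nat \<Rightarrow> nat)"

definition halted :: "instr list \<Rightarrow> config \<Rightarrow> bool" where
  "halted P cf \<longleftrightarrow> fst cf \<ge> length P \<or> P ! fst cf = Halt"

fun exec_instr :: "instr \<Rightarrow> config \<Rightarrow> config" where
  "exec_instr (Const r c) (pc, m) = (Suc pc, m(r := c))"
| "exec_instr (Add r a b) (pc, m) = (Suc pc, m(r := m a + m b))"
| "exec_instr (Sub r a b) (pc, m) = (Suc pc, m(r := m a - m b))"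
| "exec_instr (Load r a) (pc, m) = (Suc pc, m(r := m (m a)))"
| "exec_instr (Store a b) (pc, m) = (Suc pc, m(m a := m b))"
| "exec_instr (Jz r l) (pc, m) = (if m r = 0 then l else Suc pc, m)"
| "exec_instr (Jmp l) (pc, m) = (l, m)"
| "exec_instr Halt (pc, m) = (pc, m)"

definition step :: "instr list \<Rightarrow> config \<Rightarrow> config" where
  "step P cf = (if halted P cf then cf else exec_instr (P ! fst cf) cf)"

definition run :: "instr list \<Rightarrow> nat \<Rightarrow> config \<Rightarrow> config" where
  "run P k cf = (step P ^^ k) cf"

definition init_mem :: "('a \<Rightarrow> nat) \<Rightarrow> 'a list \<Rightarrow> nat \<Rightarrow> nat" where
  "init_mem e w i = (if i = 0 then length w
                     else if i \<le> length w then e (w ! (i - 1)) else 0)"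

definition decides_in_time ::
  "instr list \<Rightarrow> ('a \<Rightarrow> nat) \<Rightarrow> ('a list \<Rightarrow> bool) \<Rightarrow> (nat \<Rightarrow> nat) \<Rightarrow> bool" where
  "decides_in_time P e L T \<longleftrightarrow>
     (\<forall>w. \<exists>k \<le> T (length w).
        halted P (run P k (0, init_mem e w)) \<and>
        snd (run P k (0, init_mem e w)) 0 = (if L w then 1 else 0))"

end

theory Submission
  imports Defs
begin

definition main :: "nat \<Rightarrow> instr list" where
  "main MC = [Jz 0 166,
  Add 0 0 0,
  Add 0 0 0,
  Add 0 0 0,
  Add 0 0 0,
  Add 0 0 0,
  Store 0 1,
  Const 1 1,
  Add 0 0 1,
  Store 0 2,
  Add 0 0 1,
  Store 0 3,
  Add 0 0 1,
  Store 0 4,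
  Add 0 0 1,
  Store 0 5,
  Add 0 0 1,
  Store 0 6,
  Add 0 0 1,
  Store 0 7,
  Add 0 0 1,
  Store 0 8,
  Add 0 0 1,
  Store 0 9,
  Add 0 0 1,
  Store 0 10,
  Add 0 0 1,
  Store 0 11,
  Add 0 0 1,
  Store 0 12,
  Add 0 0 1,
  Store 0 13,
  Add 0 0 1,
  Store 0 14,
  Add 0 0 1,
  Store 0 15,
  Add 0 0 1,
  Store 0 16,
  Const 12 15,
  Sub 3 0 12,
  Const 2 0,
  Const 13 0,
  Const 14 32,
  Sub 12 3 13,
  Jz 12 48,
  Add 13 13 14,
  Add 2 2 1,
  Jmp 43,
  Const 12 16,
  Add 4 3 12,
  Const 12 (MC+1),
  Add 5 4 12,
  Add 6 5 2,
  Add 7 6 2,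
  Add 8 7 2,
  Add 8 8 1,
  Jmp 167,
  Const 9 0,
  Sub 12 2 9,
  Jz 12 75,
  Const 12 16,
  Sub 12 12 9,
  Jz 12 65,
  Add 13 3 9,
  Jmp 66,
  Add 13 9 1,
  Load 14 13,
  Add 15 5 9,
  Store 15 14,
  Add 13 4 14,
  Load 14 13,
  Add 15 6 9,
  Store 15 14,
  Add 9 9 1,
  Jmp 58,
  Const 9 0,
  Sub 12 9 2,
  Jz 12 79,
  Jmp 102,
  Const 10 0,
  Sub 12 9 10,
  Jz 12 98,
  Add 13 9 10,
  Sub 12 2 13,
  Jz 12 98,
  Add 14 6 13,
  Load 14 14,
  Sub 13 9 10,
  Sub 13 13 1,
  Add 13 5 13,
  Load 13 13,
  Sub 15 13 14,
  Sub 16 14 13,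
  Add 15 15 16,
  Jz 15 96,
  Jmp 98,
  Add 10 10 1,
  Jmp 80,
  Add 12 7 9,
  Store 12 10,
  Add 9 9 1,
  Jmp 76,
  Const 11 1,
  Add 12 11 11,
  Add 12 12 11,
  Sub 12 12 2,
  Jz 12 108,
  Jmp 165,
  Const 12 0,
  Add 9 2 12,
  Jz 9 132,
  Sub 9 9 1,
  Add 13 9 11,
  Sub 12 2 13,
  Jz 12 123,
  Add 14 5 13,
  Load 14 14,
  Add 15 5 9,
  Load 15 15,
  Sub 16 14 15,
  Sub 12 15 14,
  Add 16 16 12,
  Jz 16 125,
  Const 14 0,
  Jmp 129,
  Add 15 8 9,
  Add 15 15 1,
  Load 14 15,
  Add 14 14 1,
  Add 15 8 9,
  Store 15 14,
  Jmp 110,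
  Const 9 0,
  Add 12 11 11,
  Add 12 12 11,
  Add 12 12 9,
  Sub 12 12 2,
  Jz 12 139,
  Jmp 161,
  Add 13 8 9,
  Load 13 13,
  Sub 13 11 13,
  Jz 13 149,
  Add 13 9 11,
  Add 13 7 13,
  Load 13 13,
  Sub 13 11 13,
  Jz 13 149,
  Jmp 159,
  Add 13 9 11,
  Add 14 8 13,
  Load 14 14,
  Sub 14 11 14,
  Jz 14 163,
  Add 13 13 11,
  Add 13 7 13,
  Load 13 13,
  Sub 13 11 13,
  Jz 13 163,
  Add 9 9 1,
  Jmp 133,
  Add 11 11 1,
  Jmp 103,
  Const 0 1,
  Jmp 166,
  Const 0 0,
  Halt]"

lemma main_len[simp]: "length (main MC) = 167" by (simp add: main_def)

lemma main_nth[simp]: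
  "main MC ! 0 = Jz 0 166"
  "main MC ! 1 = Add 0 0 0"
  "main MC ! Suc 0 = Add 0 0 0"
  "main MC ! 2 = Add 0 0 0"
  "main MC ! 3 = Add 0 0 0"
  "main MC ! 4 = Add 0 0 0"
  "main MC ! 5 = Add 0 0 0"
  "main MC ! 6 = Store 0 1"
  "main MC ! 7 = Const 1 1"
  "main MC ! 8 = Add 0 0 1"
  "main MC ! 9 = Store 0 2"
  "main MC ! 10 = Add 0 0 1"
  "main MC ! 11 = Store 0 3"
  "main MC ! 12 = Add 0 0 1"
  "main MC ! 13 = Store 0 4"
  "main MC ! 14 = Add 0 0 1"
  "main MC ! 15 = Store 0 5"
  "main MC ! 16 = Add 0 0 1"
  "main MC ! 17 = Store 0 6"
  "main MC ! 18 = Add 0 0 1"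
  "main MC ! 19 = Store 0 7"
  "main MC ! 20 = Add 0 0 1"
  "main MC ! 21 = Store 0 8"
  "main MC ! 22 = Add 0 0 1"
  "main MC ! 23 = Store 0 9"
  "main MC ! 24 = Add 0 0 1"
  "main MC ! 25 = Store 0 10"
  "main MC ! 26 = Add 0 0 1"
  "main MC ! 27 = Store 0 11"
  "main MC ! 28 = Add 0 0 1"
  "main MC ! 29 = Store 0 12"
  "main MC ! 30 = Add 0 0 1"
  "main MC ! 31 = Store 0 13"
  "main MC ! 32 = Add 0 0 1"
  "main MC ! 33 = Store 0 14"
  "main MC ! 34 = Add 0 0 1"
  "main MC ! 35 = Store 0 15"
  "main MC ! 36 = Add 0 0 1"
  "main MC ! 37 = Store 0 16"
  "main MC ! 38 = Const 12 15"
  "main MC ! 39 = Sub 3 0 12"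
  "main MC ! 40 = Const 2 0"
  "main MC ! 41 = Const 13 0"
  "main MC ! 42 = Const 14 32"
  "main MC ! 43 = Sub 12 3 13"
  "main MC ! 44 = Jz 12 48"
  "main MC ! 45 = Add 13 13 14"
  "main MC ! 46 = Add 2 2 1"
  "main MC ! 47 = Jmp 43"
  "main MC ! 48 = Const 12 16"
  "main MC ! 49 = Add 4 3 12"
  "main MC ! 50 = Const 12 (MC+1)"
  "main MC ! 51 = Add 5 4 12"
  "main MC ! 52 = Add 6 5 2"
  "main MC ! 53 = Add 7 6 2"
  "main MC ! 54 = Add 8 7 2"
  "main MC ! 55 = Add 8 8 1"
  "main MC ! 56 = Jmp 167"
  "main MC ! 57 = Const 9 0"
  "main MC ! 58 = Sub 12 2 9"
  "main MC ! 59 = Jz 12 75"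
  "main MC ! 60 = Const 12 16"
  "main MC ! 61 = Sub 12 12 9"
  "main MC ! 62 = Jz 12 65"
  "main MC ! 63 = Add 13 3 9"
  "main MC ! 64 = Jmp 66"
  "main MC ! 65 = Add 13 9 1"
  "main MC ! 66 = Load 14 13"
  "main MC ! 67 = Add 15 5 9"
  "main MC ! 68 = Store 15 14"
  "main MC ! 69 = Add 13 4 14"
  "main MC ! 70 = Load 14 13"
  "main MC ! 71 = Add 15 6 9"
  "main MC ! 72 = Store 15 14"
  "main MC ! 73 = Add 9 9 1"
  "main MC ! 74 = Jmp 58"
  "main MC ! 75 = Const 9 0"
  "main MC ! 76 = Sub 12 9 2"
  "main MC ! 77 = Jz 12 79"
  "main MC ! 78 = Jmp 102"
  "main MC ! 79 = Const 10 0"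
  "main MC ! 80 = Sub 12 9 10"
  "main MC ! 81 = Jz 12 98"
  "main MC ! 82 = Add 13 9 10"
  "main MC ! 83 = Sub 12 2 13"
  "main MC ! 84 = Jz 12 98"
  "main MC ! 85 = Add 14 6 13"
  "main MC ! 86 = Load 14 14"
  "main MC ! 87 = Sub 13 9 10"
  "main MC ! 88 = Sub 13 13 1"
  "main MC ! 89 = Add 13 5 13"
  "main MC ! 90 = Load 13 13"
  "main MC ! 91 = Sub 15 13 14"
  "main MC ! 92 = Sub 16 14 13"
  "main MC ! 93 = Add 15 15 16"
  "main MC ! 94 = Jz 15 96"
  "main MC ! 95 = Jmp 98"
  "main MC ! 96 = Add 10 10 1"
  "main MC ! 97 = Jmp 80"
  "main MC ! 98 = Add 12 7 9"
  "main MC ! 99 = Store 12 10"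
  "main MC ! 100 = Add 9 9 1"
  "main MC ! 101 = Jmp 76"
  "main MC ! 102 = Const 11 1"
  "main MC ! 103 = Add 12 11 11"
  "main MC ! 104 = Add 12 12 11"
  "main MC ! 105 = Sub 12 12 2"
  "main MC ! 106 = Jz 12 108"
  "main MC ! 107 = Jmp 165"
  "main MC ! 108 = Const 12 0"
  "main MC ! 109 = Add 9 2 12"
  "main MC ! 110 = Jz 9 132"
  "main MC ! 111 = Sub 9 9 1"
  "main MC ! 112 = Add 13 9 11"
  "main MC ! 113 = Sub 12 2 13"
  "main MC ! 114 = Jz 12 123"
  "main MC ! 115 = Add 14 5 13"
  "main MC ! 116 = Load 14 14"
  "main MC ! 117 = Add 15 5 9"
  "main MC ! 118 = Load 15 15"
  "main MC ! 119 = Sub 16 14 15"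
  "main MC ! 120 = Sub 12 15 14"
  "main MC ! 121 = Add 16 16 12"
  "main MC ! 122 = Jz 16 125"
  "main MC ! 123 = Const 14 0"
  "main MC ! 124 = Jmp 129"
  "main MC ! 125 = Add 15 8 9"
  "main MC ! 126 = Add 15 15 1"
  "main MC ! 127 = Load 14 15"
  "main MC ! 128 = Add 14 14 1"
  "main MC ! 129 = Add 15 8 9"
  "main MC ! 130 = Store 15 14"
  "main MC ! 131 = Jmp 110"
  "main MC ! 132 = Const 9 0"
  "main MC ! 133 = Add 12 11 11"
  "main MC ! 134 = Add 12 12 11"
  "main MC ! 135 = Add 12 12 9"
  "main MC ! 136 = Sub 12 12 2"
  "main MC ! 137 = Jz 12 139"
  "main MC ! 138 = Jmp 161"
  "main MC ! 139 = Add 13 8 9"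
  "main MC ! 140 = Load 13 13"
  "main MC ! 141 = Sub 13 11 13"
  "main MC ! 142 = Jz 13 149"
  "main MC ! 143 = Add 13 9 11"
  "main MC ! 144 = Add 13 7 13"
  "main MC ! 145 = Load 13 13"
  "main MC ! 146 = Sub 13 11 13"
  "main MC ! 147 = Jz 13 149"
  "main MC ! 148 = Jmp 159"
  "main MC ! 149 = Add 13 9 11"
  "main MC ! 150 = Add 14 8 13"
  "main MC ! 151 = Load 14 14"
  "main MC ! 152 = Sub 14 11 14"
  "main MC ! 153 = Jz 14 163"
  "main MC ! 154 = Add 13 13 11"
  "main MC ! 155 = Add 13 7 13"
  "main MC ! 156 = Load 13 13"
  "main MC ! 157 = Sub 13 11 13"
  "main MC ! 158 = Jz 13 163"
  "main MC ! 159 = Add 9 9 1"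
  "main MC ! 160 = Jmp 133"
  "main MC ! 161 = Add 11 11 1"
  "main MC ! 162 = Jmp 103"
  "main MC ! 163 = Const 0 1"
  "main MC ! 164 = Jmp 166"
  "main MC ! 165 = Const 0 0"
  "main MC ! 166 = Halt"
  by (simp_all add: main_def)


definition spec :: "instr list \<Rightarrow> config \<Rightarrow> nat \<Rightarrow> (config \<Rightarrow> bool) \<Rightarrow> bool" where
 "spec P s t Q \<longleftrightarrow> (\<exists>k\<le>t. Q (run P k s))"

lemma run_0[simp]: "run P 0 s = s" by (simp add: run_def)
lemma run_Suc[simp]: "run P (Suc k) s = run P k (step P s)"
  by (simp add: run_def funpow_Suc_right del: funpow.simps)
lemma run_num[simp]: "run P (numeral k) s = run P (pred_numeral k) (step P s)"
  by (simp add: numeral_eq_Suc)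
lemma run_add: "run P (a+b) s = run P b (run P a s)"
  unfolding run_def by (metis add.commute comp_apply funpow_add)

lemma spec_seq: assumes "spec P s t1 R" "\<And>s1. R s1 \<Longrightarrow> spec P s1 t2 Q" shows "spec P s (t1+t2) Q"
proof -
  from assms(1) obtain k where k: "k \<le> t1" "R (run P k s)" unfolding spec_def by blast
  from assms(2)[OF k(2)] obtain k2 where "k2 \<le> t2" "Q (run P k2 (run P k s))" unfolding spec_def by blast
  thus ?thesis unfolding spec_def using k by (intro exI[of _ "k+k2"]) (simp add: run_add)
qed

lemma spec_mono: "spec P s t Q \<Longrightarrow> t \<le> t' \<Longrightarrow> spec P s t' Q"
  unfolding spec_def by (meson order_trans)

lemma spec_post: "spec P s t Q \<Longrightarrow> (\<And>c. Q c \<Longrightarrow> Q' c) \<Longrightarrow> spec P s t Q'"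
  unfolding spec_def by blast

lemma spec_eval: "Q (run P k s) \<Longrightarrow> k \<le> t \<Longrightarrow> spec P s t Q"
  unfolding spec_def by blast

lemma spec_refl: "Q s \<Longrightarrow> spec P s t Q"
  unfolding spec_def by (rule exI[of _ 0]) simp

lemma spec_loop:
  assumes st: "\<And>m. I m \<Longrightarrow> spec P (h,m) C (\<lambda>c. Q c \<or> (fst c = h \<and> I (snd c) \<and> (\<mu> (snd c) :: nat) < \<mu> m))"
  shows "I m \<Longrightarrow> spec P (h,m) ((\<mu> m + 1) * C) Q"
proof (induction "\<mu> m" arbitrary: m rule: less_induct)
  case less
  have "spec P (h,m) (C + (\<mu> m) * C) Q"
  proof (rule spec_seq[OF st[OF less.prems]])
    fix c assume a: "Q c \<or> (fst c = h \<and> I (snd c) \<and> \<mu> (snd c) < \<mu> m)"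
    show "spec P c (\<mu> m * C) Q"
    proof (cases "Q c")
      case True thus ?thesis by (rule spec_refl)
    next
      case False
      then obtain m1 where c: "c = (h, m1)" "I m1" "\<mu> m1 < \<mu> m" using a by (cases c) auto
      hence "spec P (h,m1) ((\<mu> m1 + 1) * C) Q" using less by blast
      thus ?thesis unfolding c(1) by (rule spec_mono) (use c mult_le_mono1[of "\<mu> m1 + 1" "\<mu> m" C] in simp)
    qed
  qed
  thus ?case by (simp add: algebra_simps)
qed

definition nx :: "nat \<Rightarrow> nat" where "nx n = n + 1"
lemma nx_simps[simp]: "nx 0 = 1" "nx (Suc 0) = 2" "nx (numeral k) = numeral (Num.inc k)"
  by (simp_all add: nx_def numeral_inc)

declare exec_instr.simps[simp del]

lemma exec_instr_num[simp]:
  "exec_instr (Const r c) (pc, m) = (nx pc, m(r := c))"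
  "exec_instr (Add r a b) (pc, m) = (nx pc, m(r := m a + m b))"
  "exec_instr (Sub r a b) (pc, m) = (nx pc, m(r := m a - m b))"
  "exec_instr (Load r a) (pc, m) = (nx pc, m(r := m (m a)))"
  "exec_instr (Store a b) (pc, m) = (nx pc, m(m a := m b))"
  "exec_instr (Jz r l) (pc, m) = (if m r = 0 then l else nx pc, m)"
  "exec_instr (Jmp l) (pc, m) = (l, m)"
  by (simp_all add: nx_def exec_instr.simps)


lemma spec_ev: "Q (run P k s) \<Longrightarrow> spec P s k Q"
  unfolding spec_def by blast
locale mach =
  fixes e :: "'a \<Rightarrow> nat" and f :: "'a \<Rightarrow> 'a" and xs :: "'a list"
  assumes inj: "inj e" and fin: "set xs = UNIV" and invol: "\<And>a. f (f a) = a"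
begin

definition MC where "MC = Max (e ` set xs)"

definition tbl :: "instr list" where
  "tbl = concat (map (\<lambda>a. [Const 12 (e a), Add 12 12 4, Const 13 (e (f a)), Store 12 13]) xs)"

definition prog where "prog = main MC @ tbl @ [Jmp 57]"

lemma prog_nth: "pc < 167 \<Longrightarrow> prog ! pc = main MC ! pc"
  by (simp add: prog_def nth_append)

lemma step_main[simp]: "pc < 167 \<Longrightarrow> main MC ! pc \<noteq> Halt \<Longrightarrow> step prog (pc,m) = exec_instr (main MC ! pc) (pc,m)"
  by (simp add: step_def halted_def prog_nth) (simp add: prog_def)

end
context mach begin

lemma two_x: "(x::nat) + x = 2 * x" by simp

lemma phase0:
  assumes "m 0 = n" "n \<ge> 1"
  shows "fst (run prog 43 (0, m)) = 43"
   "let m' = snd (run prog 43 (0, m)) in m' 0 = 32*n + 15 \<and> m' 1 = 1 \<and> m' 2 = 0 \<and> m' 3 = 32*n \<and> m' 12 = 15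
     \<and> m' 13 = 0 \<and> m' 14 = 32 \<and> (\<forall>i<16. m' (32*n+i) = m (i+1)) \<and> (\<forall>a. 16 < a \<longrightarrow> (a < 32*n \<or> 32*n+16 \<le> a) \<longrightarrow> m' a = m a)"
  using assms apply (simp_all add: two_x)
  apply (intro conjI allI impI)
   apply (simp_all add: numeral_2_eq_2)
  apply arith
  done

end
context mach begin

definition blkc :: "'a \<Rightarrow> instr list" where
  "blkc y = [Const 12 (e y), Add 12 12 4, Const 13 (e (f y)), Store 12 13]"

lemma tbl_alt: "tbl = concat (map blkc xs)" unfolding tbl_def blkc_def by simp

lemma len_blkc: "length (blkc y) = 4" by (simp add: blkc_def)

lemma len_concat4: "length (concat (map blkc zs)) = 4 * length zs"
  by (induction zs) (auto simp: blkc_def)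

lemma len_prog: "length prog = 168 + 4 * length xs"
  unfolding prog_def tbl_alt by (simp add: len_concat4)

lemma prog_tbl_nth:
  assumes "zs @ y # ys = xs" "r < 4"
  shows "prog ! (167 + 4 * length zs + r) = blkc y ! r"
proof -
  have lt: "4 * length zs + r < length tbl" using assms by (auto simp: tbl_alt len_concat4)
  have h1: "prog ! (167 + 4 * length zs + r) = tbl ! (4 * length zs + r)"
    unfolding prog_def using lt by (simp add: nth_append)
  have tb: "tbl = concat (map blkc zs) @ blkc y @ concat (map blkc ys)" using tbl_alt assms(1) by auto
  have h2: "tbl ! (4 * length zs + r) = blkc y ! r" unfolding tb
    using assms(2) by (simp add: nth_append len_concat4 len_blkc)
  show ?thesis using h1 h2 by simp
qed

lemma prog_ret: "prog ! (167 + 4 * length xs) = Jmp 57"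
  unfolding prog_def tbl_alt by (simp add: nth_append len_concat4)

lemma step_gen: "pc < length prog \<Longrightarrow> prog ! pc \<noteq> Halt \<Longrightarrow> step prog (pc,m) = exec_instr (prog ! pc) (pc,m)"
  by (simp add: step_def halted_def)

lemma tbl_run:
  "zs @ ys = xs \<Longrightarrow> m 4 \<ge> 17 \<Longrightarrow> \<exists>m'. run prog (4*length ys) (167 + 4*length zs, m) = (167 + 4*length xs, m') \<and>
     m' 4 = m 4 \<and> (\<forall>a. a > 16 \<longrightarrow> a \<notin> (\<lambda>y. m 4 + e y) ` set ys \<longrightarrow> m' a = m a) \<and>
     (\<forall>y\<in>set ys. m' (m 4 + e y) = e (f y)) \<and> (\<forall>r\<le>16. r \<noteq> 12 \<longrightarrow> r \<noteq> 13 \<longrightarrow> m' r = m r)"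
proof (induction ys arbitrary: zs m)
  case Nil thus ?case by auto
next
  case (Cons y ys)
  let ?pc = "167 + 4 * length zs"
  have L: "length zs < length xs" using Cons.prems(1) by auto
  have lp: "?pc + r < length prog" if "r < 4" for r using that L Cons.prems(1)[symmetric] unfolding len_prog by auto
  have pn: "prog ! (?pc + r) = blkc y ! r" if "r < 4" for r using prog_tbl_nth[OF Cons.prems(1) that] .
  define m1 where "m1 = m(12 := e y + m 4, 13 := e (f y), e y + m 4 := e (f y))"
  have r4: "run prog 4 (?pc, m) = (167 + 4 * length (zs @ [y]), m1)"
    using lp[of 0] lp[of 1] lp[of 2] lp[of 3] pn[of 0] pn[of 1] pn[of 2] pn[of 3] Cons.prems(2)
    by (simp add: step_gen blkc_def m1_def nx_def numeral_eq_Suc add.assoc)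
  have m14: "m1 4 \<ge> 17" "m1 4 = m 4" using Cons.prems(2) unfolding m1_def by auto
  obtain m' where m': "run prog (4*length ys) (167 + 4*length (zs@[y]), m1) = (167 + 4*length xs, m')"
     "m' 4 = m1 4" "(\<forall>a. a > 16 \<longrightarrow> a \<notin> (\<lambda>y. m1 4 + e y) ` set ys \<longrightarrow> m' a = m1 a)"
     "(\<forall>y\<in>set ys. m' (m1 4 + e y) = e (f y))" "(\<forall>r\<le>16. r \<noteq> 12 \<longrightarrow> r \<noteq> 13 \<longrightarrow> m' r = m1 r)"
    using Cons.IH[of "zs@[y]" m1] Cons.prems(1) m14 by auto
  have run: "run prog (4*length (y#ys)) (?pc, m) = (167 + 4*length xs, m')"
    using r4 m'(1) run_add[of prog 4 "4*length ys"] by simp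
  show ?case
  proof (rule exI[of _ m'], intro conjI)
    show "run prog (4*length (y#ys)) (?pc, m) = (167 + 4*length xs, m')" by (rule run)
    show "m' 4 = m 4" using m'(2) m14 by simp
    show "\<forall>a. a > 16 \<longrightarrow> a \<notin> (\<lambda>y. m 4 + e y) ` set (y#ys) \<longrightarrow> m' a = m a"
      using m'(3) m14 unfolding m1_def by (auto simp: add.commute)
    show "\<forall>y'\<in>set (y#ys). m' (m 4 + e y') = e (f y')"
    proof
      fix y' assume "y' \<in> set (y#ys)"
      show "m' (m 4 + e y') = e (f y')"
      proof (cases "y' \<in> set ys")
        case True thus ?thesis using m'(4) m14 by simp
      next
        case False
        hence "y' = y" using \<open>y' \<in> set (y#ys)\<close> by simp
        have "m 4 + e y \<notin> (\<lambda>y. m1 4 + e y) ` set ys"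
          using False inj \<open>y' = y\<close> m14 by (auto simp: inj_eq)
        hence "m' (m 4 + e y) = m1 (m 4 + e y)" using m'(3) Cons.prems(2) by auto
        thus ?thesis unfolding m1_def using \<open>y' = y\<close> by (simp add: add.commute)
      qed
    qed
    show "\<forall>r\<le>16. r \<noteq> 12 \<longrightarrow> r \<noteq> 13 \<longrightarrow> m' r = m r"
      using m'(5) Cons.prems(2) unfolding m1_def by auto
  qed
qed

end



locale mw = mach +
  fixes w :: "'a list"
  assumes wne: "w \<noteq> []"
begin

definition "n = length w"
definition "B = 32 * n"
definition "TT = B + 16"
definition "WA = TT + MC + 1"
definition "FA = WA + n"
definition "RA = FA + n"
definition "UA = RA + n + 1"
definition "m0 = init_mem e w"

lemma npos: "n \<ge> 1" using wne unfolding n_def by (cases w) auto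

definition "stash m \<longleftrightarrow> (\<forall>i<16. m(B+i) = m0(i+1))"
definition "frame m \<longleftrightarrow> (\<forall>a. 16 < a \<longrightarrow> (a < B \<or> B + 16 \<le> a) \<longrightarrow> m a = m0 a)"

lemma stash_upd[simp]: "r \<le> 16 \<Longrightarrow> stash (m(r := v)) = stash m"
  using npos unfolding stash_def B_def by auto

lemma frame_upd[simp]: "r \<le> 16 \<Longrightarrow> frame (m(r := v)) = frame m"
  unfolding frame_def by auto

definition "I1 m \<longleftrightarrow> m 1 = 1 \<and> m 3 = B \<and> m 14 = 32 \<and> m 13 = 32 * m 2 \<and> m 2 \<le> n \<and> stash m \<and> frame m"

lemma phase1:
  assumes "I1 m"
  shows "spec prog (43, m) ((n - m 2 + 1) * 5) (\<lambda>c. fst c = 48 \<and> I1 (snd c) \<and> snd c 2 = n)"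
proof -
  have B: "B \<ge> 32" using npos unfolding B_def by simp
  show ?thesis
  proof (rule spec_loop[where I=I1 and \<mu>="\<lambda>m. n - m 2", OF _ assms(1)])
    fix m assume I: "I1 m"
    show "spec prog (43, m) 5 (\<lambda>c. (fst c = 48 \<and> I1 (snd c) \<and> snd c 2 = n) \<or> (fst c = 43 \<and> I1 (snd c) \<and> n - snd c 2 < n - m 2))"
    proof (cases "m 2 = n")
      case True
      show ?thesis
        apply (rule spec_mono[OF spec_ev[where k=2]])
        using I True B npos unfolding I1_def by (simp_all add: B_def)
    next
      case False
      show ?thesis
        apply (rule spec_ev)
        using I False B npos unfolding I1_def by (simp add: B_def) linarith
    qed
  qed
qed



lemma MC_ge: "e a \<le> MC"
proof -
  have "a \<in> set xs" using fin by auto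
  thus ?thesis unfolding MC_def by (rule Max_ge[OF finite_imageI[OF finite_set] imageI])
qed

lemma B_ge: "B \<ge> 32" using npos unfolding B_def by simp

definition regs :: "(nat \<Rightarrow> nat) \<Rightarrow> bool" where "regs m \<longleftrightarrow> m 1 = 1 \<and> m 2 = n \<and> m 3 = B \<and> m 4 = TT \<and> m 5 = WA \<and> m 6 = FA \<and> m 7 = RA \<and> m 8 = UA"
definition "inp m \<longleftrightarrow> (\<forall>a. 16 < a \<longrightarrow> a < B \<longrightarrow> m a = m0 a)"
definition "tab m \<longleftrightarrow> (\<forall>a. m (TT + e a) = e (f a))"
definition arr :: "nat \<Rightarrow> (nat \<Rightarrow> nat) \<Rightarrow> bool" where "arr k m \<longleftrightarrow> (\<forall>j<k. m(WA+j) = e(w!j) \<and> m(FA+j) = e(f(w!j)))"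
definition "I2 m \<longleftrightarrow> regs m \<and> stash m \<and> inp m \<and> tab m \<and> m 9 \<le> n \<and> arr (m 9) m"

lemma regs_upd[simp]: "r = 0 \<or> 8 < r \<Longrightarrow> regs (m(r := v)) = regs m"
  unfolding regs_def by auto
lemma inp_upd[simp]: assumes "r \<le> 16 \<or> B \<le> r" shows "inp (m(r := v)) = inp m"
proof -
  have "\<forall>a. 16 < a \<longrightarrow> a < B \<longrightarrow> a \<noteq> r" using assms by (intro allI impI) linarith
  thus ?thesis unfolding inp_def by (simp only: fun_upd_apply) presburger
qed

lemma TT_gt[simp]: "r \<le> 16 \<Longrightarrow> r < TT" using B_ge unfolding TT_def by simp

lemma tab_upd[simp]: "r < TT \<Longrightarrow> tab (m(r := v)) = tab m"
  unfolding tab_def by auto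

lemma phase1b:
  assumes "I1 m" "m 2 = n"
  shows "spec prog (48, m) (9 + (4*length xs + 2)) (\<lambda>c. fst c = 58 \<and> I2 (snd c) \<and> snd c 9 = 0)"
proof (rule spec_seq)
  show "spec prog (48, m) 9 (\<lambda>c. fst c = 167 \<and> regs (snd c) \<and> stash (snd c) \<and> inp (snd c))"
    apply (rule spec_ev)
    using assms unfolding I1_def regs_def frame_def inp_def
    by (simp add: TT_def WA_def FA_def RA_def UA_def)
next
  fix c :: config assume c: "fst c = 167 \<and> regs (snd c) \<and> stash (snd c) \<and> inp (snd c)"
  obtain m1 where c1: "c = (167, m1)" using c by (cases c) auto
  have r1: "regs m1" "stash m1" "inp m1" using c c1 by auto
  have t4: "m1 4 = TT" "TT \<ge> 17" using r1 B_ge unfolding regs_def TT_def by auto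
  obtain m2 where m2: "run prog (4*length xs) (167 + 4*length [], m1) = (167 + 4*length xs, m2)"
     "m2 4 = m1 4" "(\<forall>a. a > 16 \<longrightarrow> a \<notin> (\<lambda>y. m1 4 + e y) ` set xs \<longrightarrow> m2 a = m1 a)"
     "(\<forall>y\<in>set xs. m2 (m1 4 + e y) = e (f y))" "(\<forall>r\<le>16. r \<noteq> 12 \<longrightarrow> r \<noteq> 13 \<longrightarrow> m2 r = m1 r)"
    using tbl_run[of "[]" xs m1] t4 by auto
  have nt: "a \<notin> (\<lambda>y. m1 4 + e y) ` set xs" if "a < TT" for a using that t4 by auto
  have regs2: "regs m2" using r1(1) m2(5) unfolding regs_def by auto
  have stash2: "stash m2" using r1(2) m2(3) nt B_ge unfolding stash_def TT_def by auto
  have inp2: "inp m2" using r1(3) m2(3) nt unfolding inp_def TT_def by auto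
  have tab2: "tab m2" using m2(4) t4 fin unfolding tab_def by auto
  have lp: "167 + 4 * length xs < length prog" by (simp add: len_prog)
  have r2: "run prog 2 (167 + 4*length xs, m2) = (58, m2(9 := 0))"
    using lp by (simp add: step_gen prog_ret)
  have "run prog (4*length xs + 2) (167, m1) = (58, m2(9:=0))"
    using m2(1) r2 run_add[of prog "4*length xs" 2] by simp
  moreover have "I2 (m2(9:=0))" using regs2 stash2 inp2 tab2 B_ge unfolding I2_def
    by (simp add: arr_def)
  ultimately show "spec prog c (4 * length xs + 2) (\<lambda>c. fst c = 58 \<and> I2 (snd c) \<and> snd c 9 = 0)"
    unfolding c1 spec_def by (intro exI[of _ "4*length xs + 2"]) simp
qed


lemma base_order: "32 \<le> B" "B + 16 = TT" "TT + MC + 1 = WA" "WA + n = FA" "FA + n = RA" "RA + n + 1 = UA"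
  using B_ge by (simp_all add: TT_def WA_def FA_def RA_def UA_def)

lemma addr_simps[simp]:
  "r \<le> 16 \<Longrightarrow> r < B + j"
  "r \<le> 16 \<Longrightarrow> r < B"
  "r \<le> 16 \<Longrightarrow> (B + j = r) = False"
  "r \<le> 16 \<Longrightarrow> (r = B + j) = False"
  "r \<le> 16 \<Longrightarrow> (B = r) = False"
  "r \<le> 16 \<Longrightarrow> (r = B) = False"
  "B \<le> B + j"
  "r \<le> 16 \<Longrightarrow> r < TT + j"
  "r \<le> 16 \<Longrightarrow> r < TT"
  "r \<le> 16 \<Longrightarrow> (TT + j = r) = False"
  "r \<le> 16 \<Longrightarrow> (r = TT + j) = False"
  "r \<le> 16 \<Longrightarrow> (TT = r) = False"
  "r \<le> 16 \<Longrightarrow> (r = TT) = False"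
  "B \<le> TT + j"
  "TT \<le> TT + j"
  "r \<le> 16 \<Longrightarrow> r < WA + j"
  "r \<le> 16 \<Longrightarrow> r < WA"
  "r \<le> 16 \<Longrightarrow> (WA + j = r) = False"
  "r \<le> 16 \<Longrightarrow> (r = WA + j) = False"
  "r \<le> 16 \<Longrightarrow> (WA = r) = False"
  "r \<le> 16 \<Longrightarrow> (r = WA) = False"
  "B \<le> WA + j"
  "TT \<le> WA + j"
  "TT + MC < WA + j"
  "r \<le> 16 \<Longrightarrow> r < FA + j"
  "r \<le> 16 \<Longrightarrow> r < FA"
  "r \<le> 16 \<Longrightarrow> (FA + j = r) = False"
  "r \<le> 16 \<Longrightarrow> (r = FA + j) = False"
  "r \<le> 16 \<Longrightarrow> (FA = r) = False"
  "r \<le> 16 \<Longrightarrow> (r = FA) = False"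
  "B \<le> FA + j"
  "TT \<le> FA + j"
  "TT + MC < FA + j"
  "r \<le> 16 \<Longrightarrow> r < RA + j"
  "r \<le> 16 \<Longrightarrow> r < RA"
  "r \<le> 16 \<Longrightarrow> (RA + j = r) = False"
  "r \<le> 16 \<Longrightarrow> (r = RA + j) = False"
  "r \<le> 16 \<Longrightarrow> (RA = r) = False"
  "r \<le> 16 \<Longrightarrow> (r = RA) = False"
  "B \<le> RA + j"
  "TT \<le> RA + j"
  "TT + MC < RA + j"
  "r \<le> 16 \<Longrightarrow> r < UA + j"
  "r \<le> 16 \<Longrightarrow> r < UA"
  "r \<le> 16 \<Longrightarrow> (UA + j = r) = False"
  "r \<le> 16 \<Longrightarrow> (r = UA + j) = False"
  "r \<le> 16 \<Longrightarrow> (UA = r) = False"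
  "r \<le> 16 \<Longrightarrow> (r = UA) = False"
  "B \<le> UA + j"
  "TT \<le> UA + j"
  "TT + MC < UA + j"
  using base_order by auto

lemma tab_addr[simp]: "(TT + e a = WA + j) = False" "(TT + e a = FA + j) = False" "(TT + e a = RA + j) = False" "(TT + e a = UA + j) = False"
  using MC_ge[of a] base_order by auto

lemma stash_upd2[simp]: "TT \<le> r \<Longrightarrow> stash (m(r := v)) = stash m"
  unfolding stash_def TT_def by auto
lemma tab_upd2[simp]: "TT + MC < r \<Longrightarrow> tab (m(r := v)) = tab m"
  unfolding tab_def using MC_ge by (metis add_le_cancel_left fun_upd_other leD)
lemma m0_inp: "i < n \<Longrightarrow> m0 (Suc i) = e (w!i)"
  unfolding m0_def init_mem_def n_def by simp

lemma arr_upd_reg[simp]: "r \<le> 16 \<Longrightarrow> arr k (m(r := v)) = arr k m"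
  unfolding arr_def by simp

lemma addr_arr[simp]: "(WA = FA) = False" "j < i \<Longrightarrow> i \<le> n \<Longrightarrow> (WA + j = FA + i) = False"
   "i < n \<Longrightarrow> (FA + j = WA + i) = False" "j < i \<Longrightarrow> (WA + j = WA + i) = False" "j < i \<Longrightarrow> (FA + j = FA + i) = False"
  using base_order npos by auto

lemma arr_snoc: "arr i m \<Longrightarrow> M (WA+i) = e(w!i) \<Longrightarrow> M (FA+i) = e(f(w!i)) \<Longrightarrow>
   (\<forall>j<i. M(WA+j) = m(WA+j) \<and> M(FA+j) = m(FA+j)) \<Longrightarrow> arr (Suc i) M"
  unfolding arr_def by (auto simp: less_Suc_eq)

lemma phase2:
  assumes "I2 m"
  shows "spec prog (58, m) ((n - m 9 + 1) * 16) (\<lambda>c. fst c = 75 \<and> I2 (snd c) \<and> snd c 9 = n)"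
proof (rule spec_loop[where I=I2 and \<mu>="\<lambda>m. n - m 9", OF _ assms(1)])
  fix m assume I: "I2 m"
  have R: "m 1 = 1" "m 2 = n" "m 3 = B" "m 4 = TT" "m 5 = WA" "m 6 = FA" "m 7 = RA" "m 8 = UA"
    using I unfolding I2_def regs_def by auto
  have S: "regs m" "stash m" "inp m" "tab m" "m 9 \<le> n" "arr (m 9) m"
    using I unfolding I2_def by auto
  show "spec prog (58, m) 16 (\<lambda>c. (fst c = 75 \<and> I2 (snd c) \<and> snd c 9 = n) \<or> (fst c = 58 \<and> I2 (snd c) \<and> n - snd c 9 < n - m 9))"
  proof (cases "m 9 = n")
    case True
    show ?thesis
      apply (rule spec_mono[OF spec_ev[where k=2]])
      using I True R unfolding I2_def by simp_all
  next
    case False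
    define i where "i = m 9"
    have i: "i < n" using False S(5) i_def by simp
    have v: "m (TT + e (w!i)) = e (f (w!i))" using S(4) unfolding tab_def by simp
    show ?thesis
    proof (cases "i < 16")
      case True
      have src: "m (B + i) = e (w!i)" using S(2) True i m0_inp unfolding stash_def by simp
      define M where "M = snd (run prog 16 (58, m))"
      have F: "fst (run prog 16 (58, m)) = 58" using R S src v i True unfolding i_def by simp
      have M: "M 9 = Suc i" "regs M" "stash M" "inp M" "tab M" "M (WA+i) = e(w!i)" "M (FA+i) = e(f(w!i))"
        using R S src v i True unfolding i_def M_def by simp_all
      have MJ: "\<forall>j<i. M(WA+j) = m(WA+j) \<and> M(FA+j) = m(FA+j)"
        using R S src v i True unfolding i_def M_def by simp
      have "I2 M" unfolding I2_def using M MJ arr_snoc[of i m M] S(6) i unfolding i_def by simp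
      thus ?thesis using F M(1) i unfolding M_def i_def spec_def by (intro exI[of _ 16]) simp
    next
      case False
      have src: "m (Suc i) = e (w!i)" using S(3) False i m0_inp base_order unfolding inp_def n_def B_def by auto
      define M where "M = snd (run prog 15 (58, m))"
      have F: "fst (run prog 15 (58, m)) = 58" using R S src v i False unfolding i_def by simp
      have M: "M 9 = Suc i" "regs M" "stash M" "inp M" "tab M" "M (WA+i) = e(w!i)" "M (FA+i) = e(f(w!i))"
        using R S src v i False unfolding i_def M_def by simp_all
      have MJ: "\<forall>j<i. M(WA+j) = m(WA+j) \<and> M(FA+j) = m(FA+j)"
        using R S src v i False unfolding i_def M_def by simp
      have "I2 M" unfolding I2_def using M MJ arr_snoc[of i m M] S(6) i unfolding i_def by simp
      thus ?thesis using F M(1) i unfolding M_def i_def spec_def by (intro exI[of _ 15]) simp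
    qed
  qed
qed

end



lemma diff_sym_zero[simp]: "((a::nat) - b) + (b - a) = 0 \<longleftrightarrow> a = b" by auto

context mw begin

definition "okc c s \<longleftrightarrow> s < c \<and> c + s < n \<and> w!(c-1-s) = f(w!(c+s))"
definition chr :: "(nat \<Rightarrow> bool) \<Rightarrow> nat \<Rightarrow> bool" where "chr P k \<longleftrightarrow> (\<forall>s<k. P s) \<and> \<not> P k"
definition rads :: "nat \<Rightarrow> (nat \<Rightarrow> nat) \<Rightarrow> bool" where "rads k m \<longleftrightarrow> (\<forall>c<k. chr (okc c) (m (RA + c)))"
definition "base m \<longleftrightarrow> regs m \<and> arr n m"
definition "I3 m \<longleftrightarrow> base m \<and> m 9 \<le> n + 1 \<and> rads (m 9) m"
definition "I4 c m \<longleftrightarrow> base m \<and> m 9 = c \<and> c \<le> n \<and> rads c m \<and> m 10 \<le> c \<and> (\<forall>s < m 10. okc c s)"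

lemma rads_upd_reg[simp]: "r \<le> 16 \<Longrightarrow> rads k (m(r := v)) = rads k m"
  unfolding rads_def by simp
lemma arr_upd_hi[simp]: "RA \<le> r \<Longrightarrow> k \<le> n \<Longrightarrow> arr k (m(r := v)) = arr k m"
  unfolding arr_def using base_order by auto
lemma base_upd_reg[simp]: "r = 0 \<or> (8 < r \<and> r \<le> 16) \<Longrightarrow> base (m(r := v)) = base m"
  unfolding base_def by auto
lemma base_upd_hi[simp]: "RA \<le> r \<Longrightarrow> base (m(r := v)) = base m"
  unfolding base_def using base_order by auto

lemma rads_snoc: "rads c m \<Longrightarrow> chr (okc c) k \<Longrightarrow> rads (Suc c) (m(RA + c := k))"
  unfolding rads_def by (auto simp: less_Suc_eq)

lemma baseD: "base m \<Longrightarrow> m 1 = 1 \<and> m 2 = n \<and> m 3 = B \<and> m 4 = TT \<and> m 5 = WA \<and> m 6 = FA \<and> m 7 = RA \<and> m 8 = UA"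
  unfolding base_def regs_def by auto
lemma baseW: "base m \<Longrightarrow> j < n \<Longrightarrow> m (WA + j) = e (w!j) \<and> m (FA + j) = e (f (w!j))"
  unfolding base_def arr_def by auto

lemma phase4_inner:
  assumes "I4 c m"
  shows "spec prog (80, m) ((c - m 10 + 1) * 17) (\<lambda>cf. fst cf = 98 \<and> base (snd cf) \<and> snd cf 9 = c \<and> c \<le> n \<and> rads c (snd cf) \<and> chr (okc c) (snd cf 10))"
proof (rule spec_loop[where I="I4 c" and \<mu>="\<lambda>m. c - m 10", OF _ assms(1)])
  fix m assume I: "I4 c m"
  have R: "m 1 = 1" "m 2 = n" "m 3 = B" "m 4 = TT" "m 5 = WA" "m 6 = FA" "m 7 = RA" "m 8 = UA"
    using I baseD unfolding I4_def by auto
  have S: "base m" "m 9 = c" "c \<le> n" "rads c m" "m 10 \<le> c" "\<forall>s < m 10. okc c s"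
    using I unfolding I4_def by auto
  define k where "k = m 10"
  show "spec prog (80, m) 17 (\<lambda>cf. (fst cf = 98 \<and> base (snd cf) \<and> snd cf 9 = c \<and> c \<le> n \<and> rads c (snd cf) \<and> chr (okc c) (snd cf 10)) \<or> (fst cf = 80 \<and> I4 c (snd cf) \<and> c - snd cf 10 < c - m 10))"
  proof (cases "k = c")
    case True
    show ?thesis
      apply (rule spec_mono[OF spec_ev[where k=2]])
      using R S True unfolding k_def chr_def okc_def by simp_all
  next
    case kc: False
    show ?thesis
    proof (cases "c + k < n")
      case False
      show ?thesis
        apply (rule spec_mono[OF spec_ev[where k=5]])
        using R S False kc unfolding k_def chr_def okc_def by simp_all
    next
      case True
      have ck: "k < c" using kc S(5) k_def by simp
      have a: "m (FA + (c + k)) = e (f (w!(c+k)))" using baseW[OF S(1) True] by simp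
      define j where "j = c - Suc k"
      have jn: "j < n" using ck S(3) j_def by simp
      have b: "m (WA + j) = e (w!j)" using baseW[OF S(1) jn] by simp
      have wj: "WA + c - Suc k = WA + j" using ck j_def by simp
      have wj2: "c - Suc k = j" using j_def by simp
      show ?thesis
      proof (cases "w!j = f (w!(c+k))")
        case True
        have okk: "okc c k" unfolding okc_def using True ck \<open>c + k < n\<close> j_def by (simp add: diff_diff_add)
        have all: "\<forall>s<Suc (m 10). okc c s" using S(6) okk by (auto simp: less_Suc_eq k_def)
        have jl: "j < c - m 10" using j_def ck k_def by simp
        show ?thesis
          apply (rule spec_ev)
          using R S True a b ck jn wj wj2 all jl \<open>c + k < n\<close> unfolding k_def I4_def
          by (simp add: inj_eq[OF inj])
      next
        case False
        have nok: "\<not> okc c k" unfolding okc_def using False ck \<open>c + k < n\<close> j_def by (simp add: diff_diff_add)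
        have ch: "chr (okc c) (m 10)" using S(6) nok unfolding chr_def k_def by simp
        show ?thesis
          apply (rule spec_mono[OF spec_ev[where k=16]])
          using R S False a b ck jn wj wj2 ch \<open>c + k < n\<close> unfolding k_def
          by (simp_all add: inj_eq[OF inj])
      qed
    qed
  qed
qed


lemma phase3:
  assumes "I3 m"
  shows "spec prog (76, m) ((n + 1 - m 9 + 1) * (3 + ((n+1)*17 + 4))) (\<lambda>cf. fst cf = 102 \<and> base (snd cf) \<and> rads (n+1) (snd cf))"
proof (rule spec_loop[where I="I3" and \<mu>="\<lambda>m. n + 1 - m 9", OF _ assms(1)])
  fix m assume I: "I3 m"
  have R: "m 1 = 1" "m 2 = n" "m 3 = B" "m 4 = TT" "m 5 = WA" "m 6 = FA" "m 7 = RA" "m 8 = UA"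
    using I baseD unfolding I3_def by auto
  have S: "base m" "m 9 \<le> n + 1" "rads (m 9) m" using I unfolding I3_def by auto
  define c where "c = m 9"
  let ?Q = "\<lambda>cf. (fst cf = 102 \<and> base (snd cf) \<and> rads (n+1) (snd cf)) \<or> (fst cf = 76 \<and> I3 (snd cf) \<and> n + 1 - snd cf 9 < n + 1 - m 9)"
  show "spec prog (76, m) (3 + ((n+1)*17 + 4)) ?Q"
  proof (cases "c = n + 1")
    case True
    show ?thesis
      apply (rule spec_mono[OF spec_ev[where k=3]])
      using R S True unfolding c_def by simp_all
  next
    case False
    hence cn: "c \<le> n" using S(2) c_def by simp
    show ?thesis
    proof (rule spec_seq)
      show "spec prog (76, m) 3 (\<lambda>cf. fst cf = 80 \<and> I4 c (snd cf))"
        apply (rule spec_ev)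
        using R S cn unfolding c_def I4_def by simp
    next
      fix cf :: config assume cf: "fst cf = 80 \<and> I4 c (snd cf)"
      obtain m1 where m1: "cf = (80, m1)" "I4 c m1" using cf by (cases cf) auto
      show "spec prog cf ((n+1)*17 + 4) ?Q"
      proof (rule spec_seq)
        show "spec prog cf ((n+1)*17) (\<lambda>cf. fst cf = 98 \<and> base (snd cf) \<and> snd cf 9 = c \<and> c \<le> n \<and> rads c (snd cf) \<and> chr (okc c) (snd cf 10))"
        proof -
          have "(c - m1 10 + 1) * 17 \<le> (n+1)*17" using cn by simp
          thus ?thesis unfolding m1(1) by (rule spec_mono[OF phase4_inner[OF m1(2)]])
        qed
      next
        fix cf2 :: config assume cf2: "fst cf2 = 98 \<and> base (snd cf2) \<and> snd cf2 9 = c \<and> c \<le> n \<and> rads c (snd cf2) \<and> chr (okc c) (snd cf2 10)"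
        obtain m2 where m2: "cf2 = (98, m2)" "base m2" "m2 9 = c" "rads c m2" "chr (okc c) (m2 10)"
          using cf2 by (cases cf2) auto
        have R2: "m2 7 = RA" "m2 1 = 1" using baseD[OF m2(2)] by simp_all
        have rr: "rads (Suc c) (m2(12 := RA + c, RA + c := m2 10))"
          by (rule rads_snoc) (use m2 in simp_all)
        show "spec prog cf2 4 ?Q"
          unfolding m2(1)
          apply (rule spec_ev)
          using m2 R2 rr cn False unfolding I3_def c_def by simp
      qed
    qed
  qed
qed

end



context mw begin

definition "runok mm i s \<longleftrightarrow> i + s + mm < n \<and> w!(i+s) = w!(i+s+mm)"
definition runs :: "nat \<Rightarrow> nat \<Rightarrow> (nat \<Rightarrow> nat) \<Rightarrow> bool" where
  "runs mm j m \<longleftrightarrow> (\<forall>i. j \<le> i \<longrightarrow> i < n \<longrightarrow> chr (runok mm i) (m (UA + i)))"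
definition "cnd p mm \<longleftrightarrow> ((\<forall>s<mm. runok mm p s) \<or> (\<forall>s<mm. okc (p+mm) s)) \<and>
                          ((\<forall>s<mm. runok mm (p+mm) s) \<or> (\<forall>s<mm. okc (p+2*mm) s))"
definition G :: "nat \<Rightarrow> (nat \<Rightarrow> nat) \<Rightarrow> bool" where
  "G mm m \<longleftrightarrow> base m \<and> rads (n+1) m \<and> m 11 = mm \<and> 1 \<le> mm \<and> 3*mm \<le> n \<and>
     (\<forall>mm' p. 1 \<le> mm' \<longrightarrow> mm' < mm \<longrightarrow> p + 3*mm' \<le> n \<longrightarrow> \<not> cnd p mm')"
definition "I6 mm m \<longleftrightarrow> G mm m \<and> m 9 \<le> n \<and> runs mm (m 9) m"

lemma G_upd_reg[simp]: "r = 0 \<or> (8 < r \<and> r \<le> 16 \<and> r \<noteq> 11) \<Longrightarrow> G mm (m(r := v)) = G mm m"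
  unfolding G_def by auto
lemma rads_upd_ua[simp]: "UA \<le> r \<Longrightarrow> rads (Suc n) (m(r := v)) = rads (Suc n) m"
  unfolding rads_def using base_order by auto
lemma G_upd_ua[simp]: "UA \<le> r \<Longrightarrow> G mm (m(r := v)) = G mm m"
  unfolding G_def using base_order by auto
lemma runs_upd_reg[simp]: "r \<le> 16 \<Longrightarrow> runs mm j (m(r := v)) = runs mm j m"
  unfolding runs_def by simp

lemma runs_upd_reg2[simp]: "r \<le> 16 \<Longrightarrow> r \<noteq> a \<Longrightarrow> runs mm j (m(r := v, a := x)) = runs mm j (m(a := x))"
  by (metis fun_upd_twist runs_upd_reg)

lemma GD: "G mm m \<Longrightarrow> m 1 = 1 \<and> m 2 = n \<and> m 3 = B \<and> m 4 = TT \<and> m 5 = WA \<and> m 6 = FA \<and> m 7 = RA \<and> m 8 = UA \<and> m 11 = mm \<and> 1 \<le> mm \<and> 3*mm \<le> n"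
  unfolding G_def using baseD by auto
lemma GW: "G mm m \<Longrightarrow> j < n \<Longrightarrow> m (WA + j) = e (w!j)"
  unfolding G_def using baseW by auto

lemma runs_snoc: assumes "runs mm (Suc i) m" "chr (runok mm i) v" shows "runs mm i (m(UA + i := v))"
  unfolding runs_def
proof (intro allI impI)
  fix ia assume ia: "i \<le> ia" "ia < n"
  show "chr (runok mm ia) ((m(UA + i := v)) (UA + ia))"
  proof (cases "ia = i")
    case True thus ?thesis using assms(2) by simp
  next
    case False
    hence "Suc i \<le> ia" using ia by simp
    thus ?thesis using assms(1) ia False unfolding runs_def by simp
  qed
qed

lemma phase6:
  assumes "I6 mm m"
  shows "spec prog (110, m) ((m 9 + 1) * 20) (\<lambda>cf. fst cf = 132 \<and> G mm (snd cf) \<and> runs mm 0 (snd cf))"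
proof (rule spec_loop[where I="I6 mm" and \<mu>="\<lambda>m. m 9", OF _ assms(1)])
  fix m assume I: "I6 mm m"
  have R: "m 1 = 1" "m 2 = n" "m 3 = B" "m 4 = TT" "m 5 = WA" "m 6 = FA" "m 7 = RA" "m 8 = UA" "m 11 = mm" "1 \<le> mm" "3*mm \<le> n"
    using I GD unfolding I6_def by auto
  have S: "G mm m" "m 9 \<le> n" "runs mm (m 9) m" using I unfolding I6_def by auto
  let ?Q = "\<lambda>cf. (fst cf = 132 \<and> G mm (snd cf) \<and> runs mm 0 (snd cf)) \<or> (fst cf = 110 \<and> I6 mm (snd cf) \<and> snd cf 9 < m 9)"
  show "spec prog (110, m) 20 ?Q"
  proof (cases "m 9 = 0")
    case True
    show ?thesis
      apply (rule spec_mono[OF spec_ev[where k=1]])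
      using R S True by simp_all
  next
    case False
    define i where "i = m 9 - 1"
    have i: "m 9 = Suc i" "i < n" using False S(2) i_def by auto
    show ?thesis
    proof (cases "i + mm < n")
      case False
      have ch: "chr (runok mm i) 0" unfolding chr_def runok_def using False by simp
      have rs: "runs mm i (m(UA + i := 0))" by (rule runs_snoc) (use S(3) i ch in simp_all)
      show ?thesis
        apply (rule spec_mono[OF spec_ev[where k=10]])
        using R S i False rs unfolding I6_def
        apply simp_all
        done
    next
      case True
      have a: "m (WA + (i + mm)) = e (w!(i+mm))" "m (WA + i) = e (w!i)" using GW[OF S(1)] True by auto
      show ?thesis
      proof (cases "w!i = w!(i+mm)")
        case False
        have ch: "chr (runok mm i) 0" unfolding chr_def runok_def using False by simp
        have rs: "runs mm i (m(UA + i := 0))" by (rule runs_snoc) (use S(3) i ch in simp_all)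
        show ?thesis
          apply (rule spec_mono[OF spec_ev[where k=18]])
          using R S i False True a rs unfolding I6_def
          apply (simp_all add: inj_eq[OF inj])
          done
      next
        case eq: True
        have i1: "Suc i < n" using True R(10) by simp
        have c1: "chr (runok mm (Suc i)) (m (UA + Suc i))" using S(3) i i1 unfolding runs_def by (metis le_refl)
        have ch: "chr (runok mm i) (m (UA + Suc i) + 1)"
          using c1 eq True unfolding chr_def runok_def
          apply (auto simp: less_Suc_eq_0_disj)
          done
        have rs: "runs mm i (m(UA + i := m (UA + Suc i) + 1))" by (rule runs_snoc) (use S(3) i ch in simp_all)
        show ?thesis
          apply (rule spec_ev)
          using R S i eq True a rs unfolding I6_def
          apply (simp_all add: inj_eq[OF inj])
          done
      qed
    qed
  qed
qed


definition "ANS \<longleftrightarrow> (\<exists>p mm. 1 \<le> mm \<and> p + 3*mm \<le> n \<and> cnd p mm)"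
definition "c1 mm p \<longleftrightarrow> (\<forall>s<mm. runok mm p s) \<or> (\<forall>s<mm. okc (p+mm) s)"
definition "I7 mm m \<longleftrightarrow> G mm m \<and> runs mm 0 m \<and> (\<forall>p'<m 9. p' + 3*mm \<le> n \<longrightarrow> \<not> cnd p' mm)"

lemma I7_upd_reg[simp]: "8 < r \<Longrightarrow> r \<le> 16 \<Longrightarrow> r \<noteq> 11 \<Longrightarrow> r \<noteq> 9 \<Longrightarrow> I7 mm (m(r := v)) = I7 mm m"
  unfolding I7_def by simp

lemma chr_le: "chr P k \<Longrightarrow> (mm \<le> k \<longleftrightarrow> (\<forall>s<mm. P s))"
  unfolding chr_def by (meson leI order_less_le_trans)

lemma G_rad: "G mm m \<Longrightarrow> c \<le> n \<Longrightarrow> chr (okc c) (m (RA + c))"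
  unfolding G_def rads_def by auto
lemma runs_U: "runs mm 0 m \<Longrightarrow> p < n \<Longrightarrow> chr (runok mm p) (m (UA + p))"
  unfolding runs_def by auto

lemma segB:
  assumes I: "I7 mm m" and pn: "m 9 + 3*mm \<le> n"
  shows "spec prog (139, m) 12 (\<lambda>cf. (fst cf = 149 \<and> I7 mm (snd cf) \<and> snd cf 9 = m 9 \<and> c1 mm (m 9)) \<or> (fst cf = 133 \<and> I7 mm (snd cf) \<and> snd cf 9 = Suc (m 9)))"
proof -
  have S: "G mm m" "runs mm 0 m" "\<forall>p'<m 9. p' + 3*mm \<le> n \<longrightarrow> \<not> cnd p' mm" using I unfolding I7_def by auto
  have R: "m 1 = 1" "m 2 = n" "m 3 = B" "m 4 = TT" "m 5 = WA" "m 6 = FA" "m 7 = RA" "m 8 = UA" "m 11 = mm" "1 \<le> mm" "3*mm \<le> n"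
    using GD[OF S(1)] by auto
  define p where "p = m 9"
  have u: "mm \<le> m (UA + p) \<longleftrightarrow> (\<forall>s<mm. runok mm p s)" using chr_le[OF runs_U[OF S(2)]] pn R(10) p_def by simp
  have r: "mm \<le> m (RA + (p + mm)) \<longleftrightarrow> (\<forall>s<mm. okc (p+mm) s)" using chr_le[OF G_rad[OF S(1)]] pn p_def by simp
  show ?thesis
  proof (cases "mm \<le> m (UA + p)")
    case True
    show ?thesis
      apply (rule spec_mono[OF spec_ev[where k=4]])
      using I R S True u unfolding p_def c1_def by simp_all
  next
    case F1: False
    show ?thesis
    proof (cases "mm \<le> m (RA + (p + mm))")
      case True
      show ?thesis
        apply (rule spec_mono[OF spec_ev[where k=9]])
        using I R S True F1 r unfolding p_def c1_def by simp_all
    next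
      case False
      have nc: "\<not> cnd p mm" using F1 False u r unfolding cnd_def by simp
      have all: "\<forall>p'<Suc p. p' + 3*mm \<le> n \<longrightarrow> \<not> cnd p' mm" using S(3) nc p_def by (auto simp: less_Suc_eq)
      show ?thesis
        apply (rule spec_ev)
        using R S False F1 all unfolding p_def I7_def by simp_all
    qed
  qed
qed


lemma segC:
  assumes I: "I7 mm m" and pn: "m 9 + 3*mm \<le> n" and C: "c1 mm (m 9)"
  shows "spec prog (149, m) 12 (\<lambda>cf. (fst cf = 166 \<and> snd cf 0 = 1 \<and> ANS) \<or> (fst cf = 133 \<and> I7 mm (snd cf) \<and> snd cf 9 = Suc (m 9)))"
proof -
  have S: "G mm m" "runs mm 0 m" "\<forall>p'<m 9. p' + 3*mm \<le> n \<longrightarrow> \<not> cnd p' mm" using I unfolding I7_def by auto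
  have R: "m 1 = 1" "m 2 = n" "m 3 = B" "m 4 = TT" "m 5 = WA" "m 6 = FA" "m 7 = RA" "m 8 = UA" "m 11 = mm" "1 \<le> mm" "3*mm \<le> n"
    using GD[OF S(1)] by auto
  define p where "p = m 9"
  have u: "mm \<le> m (UA + (p + mm)) \<longleftrightarrow> (\<forall>s<mm. runok mm (p+mm) s)" using chr_le[OF runs_U[OF S(2)]] pn R(10) p_def by simp
  have r: "mm \<le> m (RA + (p + mm + mm)) \<longleftrightarrow> (\<forall>s<mm. okc (p+2*mm) s)" using chr_le[OF G_rad[OF S(1), of "p+mm+mm"]] pn p_def
    by (simp add: mult_2 add.assoc)
  show ?thesis
  proof (cases "mm \<le> m (UA + (p + mm))")
    case True
    have "ANS" unfolding ANS_def cnd_def using C True u R(10) pn unfolding p_def c1_def by blast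
    show ?thesis
      apply (rule spec_mono[OF spec_ev[where k=7]])
      using R S True \<open>ANS\<close> unfolding p_def by simp_all
  next
    case F1: False
    show ?thesis
    proof (cases "mm \<le> m (RA + (p + mm + mm))")
      case True
      have "ANS" unfolding ANS_def cnd_def using C True r R(10) pn unfolding p_def c1_def by blast
      show ?thesis
        apply (rule spec_ev)
        using R S True F1 \<open>ANS\<close> unfolding p_def by simp_all
    next
      case False
      have nc: "\<not> cnd p mm" using F1 False u r unfolding cnd_def by simp
      have all: "\<forall>p'<Suc p. p' + 3*mm \<le> n \<longrightarrow> \<not> cnd p' mm" using S(3) nc p_def by (auto simp: less_Suc_eq)
      show ?thesis
        apply (rule spec_ev)
        using R S False F1 all unfolding p_def I7_def by simp_all
    qed
  qed
qed


definition "Q7 mm cf \<longleftrightarrow> (fst cf = 161 \<and> G mm (snd cf) \<and> (\<forall>p. p + 3*mm \<le> n \<longrightarrow> \<not> cnd p mm)) \<or> (fst cf = 166 \<and> snd cf 0 = 1 \<and> ANS)"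

lemma phase7:
  assumes "I7 mm m"
  shows "spec prog (133, m) ((n + 1 - m 9 + 1) * (5 + (12 + 12))) (Q7 mm)"
proof (rule spec_loop[where I="I7 mm" and \<mu>="\<lambda>m. n + 1 - m 9", OF _ assms(1)])
  fix m assume I: "I7 mm m"
  have S: "G mm m" "runs mm 0 m" "\<forall>p'<m 9. p' + 3*mm \<le> n \<longrightarrow> \<not> cnd p' mm" using I unfolding I7_def by auto
  have R: "m 1 = 1" "m 2 = n" "m 3 = B" "m 4 = TT" "m 5 = WA" "m 6 = FA" "m 7 = RA" "m 8 = UA" "m 11 = mm" "1 \<le> mm" "3*mm \<le> n"
    using GD[OF S(1)] by auto
  let ?Q = "\<lambda>cf. Q7 mm cf \<or> (fst cf = 133 \<and> I7 mm (snd cf) \<and> n + 1 - snd cf 9 < n + 1 - m 9)"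
  show "spec prog (133, m) (5 + (12 + 12)) ?Q"
  proof (cases "m 9 + 3*mm \<le> n")
    case False
    have all: "\<forall>p. p + 3*mm \<le> n \<longrightarrow> \<not> cnd p mm" using S(3) False by (meson add_le_mono1 leI order_trans)
    show ?thesis
      apply (rule spec_mono[OF spec_ev[where k=6]])
      using R S False all unfolding Q7_def by simp_all
  next
    case True
    show ?thesis
    proof (rule spec_seq)
      show "spec prog (133, m) 5 (\<lambda>cf. cf = (139, m(12 := 0)))"
        apply (rule spec_ev)
        using R True by simp
    next
      fix cf :: config assume cf: "cf = (139, m(12 := 0))"
      have I': "I7 mm (m(12 := 0))" using I by simp
      have pn': "(m(12:=0)) 9 + 3*mm \<le> n" using True by simp
      show "spec prog cf (12 + 12) ?Q"
        unfolding cf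
      proof (rule spec_seq[OF segB[OF I' pn']])
        fix cf2 :: config
        assume cf2: "(fst cf2 = 149 \<and> I7 mm (snd cf2) \<and> snd cf2 9 = (m(12 := 0)) 9 \<and> c1 mm ((m(12 := 0)) 9)) \<or> (fst cf2 = 133 \<and> I7 mm (snd cf2) \<and> snd cf2 9 = Suc ((m(12 := 0)) 9))"
        show "spec prog cf2 12 ?Q"
        proof (cases "fst cf2 = 149")
          case True
          obtain m2 where m2: "cf2 = (149, m2)" "I7 mm m2" "m2 9 = m 9" "c1 mm (m 9)" using cf2 True by (cases cf2) auto
          show ?thesis unfolding m2(1)
            apply (rule spec_post[OF segC[OF m2(2)]])
            using \<open>m 9 + 3*mm \<le> n\<close> m2 unfolding Q7_def by auto
        next
          case False
          hence "fst cf2 = 133 \<and> I7 mm (snd cf2) \<and> snd cf2 9 = Suc (m 9)" using cf2 by auto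
          moreover have "n - m 9 < Suc n - m 9" using True by (simp add: Suc_diff_le)
          ultimately show ?thesis by (intro spec_refl) simp
        qed
      qed
    qed
  qed
qed

definition "I5 m \<longleftrightarrow> base m \<and> rads (n+1) m \<and> 1 \<le> m 11 \<and> (\<forall>mm' p. 1 \<le> mm' \<longrightarrow> mm' < m 11 \<longrightarrow> p + 3*mm' \<le> n \<longrightarrow> \<not> cnd p mm')"
definition "Qfin cf \<longleftrightarrow> fst cf = 166 \<and> snd cf 0 = (if ANS then 1 else 0)"

lemma phase5:
  assumes "I5 m"
  shows "spec prog (103, m) ((n + 1 - m 11 + 1) * (6 + ((n+1)*20 + (1 + ((n+2)*29 + 2))))) Qfin"
proof (rule spec_loop[where I="I5" and \<mu>="\<lambda>m. n + 1 - m 11", OF _ assms(1)])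
  fix m assume I: "I5 m"
  have S: "base m" "rads (n+1) m" "1 \<le> m 11" "\<forall>mm' p. 1 \<le> mm' \<longrightarrow> mm' < m 11 \<longrightarrow> p + 3*mm' \<le> n \<longrightarrow> \<not> cnd p mm'"
    using I unfolding I5_def by auto
  have R: "m 1 = 1" "m 2 = n" "m 3 = B" "m 4 = TT" "m 5 = WA" "m 6 = FA" "m 7 = RA" "m 8 = UA"
    using baseD[OF S(1)] by auto
  define mm where "mm = m 11"
  let ?Q = "\<lambda>cf. Qfin cf \<or> (fst cf = 103 \<and> I5 (snd cf) \<and> n + 1 - snd cf 11 < n + 1 - m 11)"
  show "spec prog (103, m) (6 + ((n+1)*20 + (1 + ((n+2)*29 + 2)))) ?Q"
  proof (cases "3 * mm \<le> n")
    case False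
    have na: "\<not> ANS"
    proof
      assume ANS
      then obtain p mm' where h: "1 \<le> mm'" "p + 3*mm' \<le> n" "cnd p mm'" unfolding ANS_def by blast
      show False
      proof (cases "mm' < mm")
        case True thus False using S(4) h mm_def by blast
      next
        case False thus False using h \<open>\<not> 3 * mm \<le> n\<close> by linarith
      qed
    qed
    show ?thesis
      apply (rule spec_mono[OF spec_ev[where k=6]])
      using R S False na unfolding mm_def Qfin_def by simp_all
  next
    case True
    have G0: "G mm (m(12 := 0, 9 := n))" unfolding G_def using S True mm_def by simp
    show ?thesis
    proof (rule spec_seq)
      show "spec prog (103, m) 6 (\<lambda>cf. cf = (110, m(12 := 0, 9 := n)))"
        apply (rule spec_ev)
        using R True unfolding mm_def by simp
    next
      fix cf :: config assume cf: "cf = (110, m(12 := 0, 9 := n))"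
      have I6: "I6 mm (m(12 := 0, 9 := n))" using G0 unfolding I6_def runs_def by simp
      show "spec prog cf ((n+1)*20 + (1 + ((n+2)*29 + 2))) ?Q"
      proof (rule spec_seq)
        show "spec prog cf ((n+1)*20) (\<lambda>cf. fst cf = 132 \<and> G mm (snd cf) \<and> runs mm 0 (snd cf))"
          unfolding cf using phase6[OF I6] by simp
      next
        fix cf2 :: config assume cf2: "fst cf2 = 132 \<and> G mm (snd cf2) \<and> runs mm 0 (snd cf2)"
        obtain m2 where m2: "cf2 = (132, m2)" "G mm m2" "runs mm 0 m2" using cf2 by (cases cf2) auto
        have R2: "m2 1 = 1" "m2 11 = mm" using GD[OF m2(2)] by auto
        show "spec prog cf2 (1 + ((n+2)*29 + 2)) ?Q"
        proof (rule spec_seq)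
          show "spec prog cf2 1 (\<lambda>cf. cf = (133, m2(9 := 0)))"
            unfolding m2(1) by (rule spec_ev) simp
        next
          fix cf3 :: config assume cf3: "cf3 = (133, m2(9 := 0))"
          have I7: "I7 mm (m2(9 := 0))" unfolding I7_def using m2 by simp
          show "spec prog cf3 ((n+2)*29 + 2) ?Q"
          proof (rule spec_seq)
            show "spec prog cf3 ((n+2)*29) (Q7 mm)"
              unfolding cf3 using phase7[OF I7] by simp
          next
            fix cf4 :: config assume q: "Q7 mm cf4"
            show "spec prog cf4 2 ?Q"
            proof (cases "fst cf4 = 166")
              case True
              hence "Qfin cf4" using q unfolding Q7_def Qfin_def by auto
              thus ?thesis by (intro spec_refl) simp
            next
              case False
              then obtain m4 where m4: "cf4 = (161, m4)" "G mm m4" "\<forall>p. p + 3*mm \<le> n \<longrightarrow> \<not> cnd p mm"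
                using q unfolding Q7_def by (cases cf4) auto
              have R4: "m4 1 = 1" "m4 11 = mm" "base m4" "rads (n+1) m4" using m4(2) GD unfolding G_def by auto
              have all: "\<forall>mm' p. 1 \<le> mm' \<longrightarrow> mm' < Suc mm \<longrightarrow> p + 3*mm' \<le> n \<longrightarrow> \<not> cnd p mm'"
                using m4(2) m4(3) unfolding G_def by (metis less_SucE)
              show ?thesis unfolding m4(1)
                apply (rule spec_ev)
                using R4 all True S(3) unfolding I5_def mm_def by (simp add: Suc_diff_le)
            qed
          qed
        qed
      qed
    qed
  qed
qed

end




lemma phi_nil: assumes "antimorphic_involution \<phi>" shows "\<phi> [] = []"
proof -
  have "\<phi> ([] @ []) = \<phi> [] @ \<phi> []" using assms unfolding antimorphic_involution_def by blast
  hence "length (\<phi> []) = length (\<phi> []) + length (\<phi> [])" by (metis append_Nil length_append)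
  thus ?thesis by simp
qed

lemma phi_len_ge: assumes "antimorphic_involution \<phi>" shows "length (\<phi> v) \<ge> length v"
proof (induction v)
  case Nil thus ?case by simp
next
  case (Cons a v)
  have h: "\<phi> ([a] @ v) = \<phi> v @ \<phi> [a]" using assms unfolding antimorphic_involution_def by blast
  have "\<phi> [a] \<noteq> []"
  proof
    assume "\<phi> [a] = []"
    hence "\<phi> (\<phi> [a]) = []" using phi_nil[OF assms] by simp
    thus False using assms unfolding antimorphic_involution_def by simp
  qed
  hence "length (\<phi> [a]) \<ge> 1" by (cases "\<phi> [a]") auto
  thus ?case using h Cons by simp
qed

lemma phi_single: assumes "antimorphic_involution \<phi>" shows "\<phi> [a] = [hd (\<phi> [a])]"
proof -
  have i: "\<phi> (\<phi> [a]) = [a]" using assms unfolding antimorphic_involution_def by blast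
  have "length (\<phi> [a]) \<le> 1" using phi_len_ge[OF assms, of "\<phi> [a]"] i by simp
  moreover have "\<phi> [a] \<noteq> []" using i phi_nil[OF assms] by auto
  ultimately show ?thesis by (cases "\<phi> [a]") auto
qed

lemma phi_rev_map: assumes "antimorphic_involution \<phi>" shows "\<phi> w = rev (map (\<lambda>a. hd (\<phi> [a])) w)"
proof (induction w)
  case Nil thus ?case using phi_nil[OF assms] by simp
next
  case (Cons a v)
  have h: "\<phi> ([a] @ v) = \<phi> v @ \<phi> [a]" using assms unfolding antimorphic_involution_def by blast
  thus ?case using Cons phi_single[OF assms, of a] by simp
qed

lemma phi_f_invol: assumes "antimorphic_involution \<phi>" shows "hd (\<phi> [hd (\<phi> [a])]) = a"
proof -
  have i: "\<phi> (\<phi> [a]) = [a]" using assms unfolding antimorphic_involution_def by blast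
  thus ?thesis using phi_single[OF assms, of a] by (metis list.sel(1))
qed

definition blk :: "'a list \<Rightarrow> nat \<Rightarrow> nat \<Rightarrow> nat \<Rightarrow> 'a list" where
  "blk w p mm j = take mm (drop (p + j*mm) w)"

definition rel :: "('a \<Rightarrow> 'a) \<Rightarrow> 'a list \<Rightarrow> 'a list \<Rightarrow> bool" where
  "rel f X Y \<longleftrightarrow> X = Y \<or> X = rev (map f Y)"

lemma rel_sym: assumes "\<And>a. f (f a) = a" "rel f X Y" shows "rel f Y X"
  using assms unfolding rel_def by (auto simp: rev_map comp_def)

lemma rel_trans: assumes "\<And>a. f (f a) = a" "rel f X Y" "rel f Y Z" shows "rel f X Z"
  using assms unfolding rel_def by (auto simp: rev_map comp_def)

lemma rel_refl: "rel f X X" unfolding rel_def by simp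

lemma pc_char:
  assumes "\<And>a. f (f a) = a"
  shows "contains_pseudo_cube (\<lambda>w. rev (map f w)) w \<longleftrightarrow>
    (\<exists>p mm. 1 \<le> mm \<and> p + 3*mm \<le> length w \<and> rel f (blk w p mm 0) (blk w p mm 1) \<and> rel f (blk w p mm 1) (blk w p mm 2))"
proof
  assume "contains_pseudo_cube (\<lambda>w. rev (map f w)) w"
  then obtain x pre suf where w: "w = pre @ x @ suf" and pcx: "pseudo_cube (\<lambda>w. rev (map f w)) x"
    unfolding contains_pseudo_cube_def is_factor_def by blast
  then obtain u :: "nat \<Rightarrow> 'a list" where x: "x \<noteq> []" "x = u 1 @ u 2 @ u 3"
    and r: "\<And>i j. i \<in> {1,2,3} \<Longrightarrow> j \<in> {1,2,3} \<Longrightarrow> u i = u j \<or> u i = rev (map f (u j))"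
    unfolding pseudo_cube_def by blast
  have l: "length (u i) = length (u j)" if "i \<in> {1,2,3}" "j \<in> {1,2,3}" for i j
    using r[OF that] by auto
  define mm where "mm = length (u 1)"
  have l2: "length (u 2) = mm" "length (u 3) = mm" using l[of 2 1] l[of 3 1] mm_def by auto
  have mm1: "1 \<le> mm" using x l2 mm_def by (cases mm) auto
  define p where "p = length pre"
  have b0: "blk w p mm 0 = u 1" unfolding blk_def w p_def x(2) using mm_def by simp
  have b1: "blk w p mm 1 = u 2" unfolding blk_def w p_def x(2) using mm_def l2 by simp
  have b2: "blk w p mm 2 = u 3" unfolding blk_def w p_def x(2) using mm_def l2
    by (simp add: mult_2)
  have len: "p + 3*mm \<le> length w" unfolding w x(2) p_def using l2 mm_def by simp
  have r1: "rel f (u 1) (u 2)" using r[of 1 2] unfolding rel_def by simp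
  have r2: "rel f (u 2) (u 3)" using r[of 2 3] unfolding rel_def by simp
  show "\<exists>p mm. 1 \<le> mm \<and> p + 3*mm \<le> length w \<and> rel f (blk w p mm 0) (blk w p mm 1) \<and> rel f (blk w p mm 1) (blk w p mm 2)"
    using mm1 len r1 r2 b0 b1 b2 by metis
next
  assume "\<exists>p mm. 1 \<le> mm \<and> p + 3*mm \<le> length w \<and> rel f (blk w p mm 0) (blk w p mm 1) \<and> rel f (blk w p mm 1) (blk w p mm 2)"
  then obtain p mm where h: "1 \<le> mm" "p + 3*mm \<le> length w" "rel f (blk w p mm 0) (blk w p mm 1)" "rel f (blk w p mm 1) (blk w p mm 2)"
    by blast
  define u where "u = (\<lambda>i::nat. blk w p mm (i - 1))"
  have r01: "rel f (u 1) (u 2)" using h(3) unfolding u_def by simp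
  have r12: "rel f (u 2) (u 3)" using h(4) unfolding u_def by (simp add: numeral_2_eq_2)
  have r02: "rel f (u 1) (u 3)" by (rule rel_trans[OF assms r01 r12])
  have rr: "u i = u j \<or> u i = rev (map f (u j))" if "i \<in> {1,2,3}" "j \<in> {1,2,3}" for i j
  proof -
    have "rel f (u i) (u j)"
      using that r01 r12 r02 rel_sym[OF assms] rel_refl by fastforce
    thus ?thesis unfolding rel_def .
  qed
  have x: "take (3*mm) (drop p w) = u 1 @ u 2 @ u 3"
  proof -
    have e: "3*mm = mm + (mm + mm)" by simp
    have "take (3*mm) (drop p w) = take mm (drop p w) @ take mm (drop (p+mm) w) @ take mm (drop (p+2*mm) w)"
      unfolding e take_add by (simp add: add.assoc mult_2 add.commute add.left_commute)
    thus ?thesis unfolding u_def blk_def by (simp add: numeral_2_eq_2 mult_2)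
  qed
  have ne: "take (3*mm) (drop p w) \<noteq> []" using h(1) h(2) by simp
  have pc: "pseudo_cube (\<lambda>w. rev (map f w)) (take (3*mm) (drop p w))"
    unfolding pseudo_cube_def using ne x rr by blast
  have "w = take p w @ take (3*mm) (drop p w) @ drop (3*mm) (drop p w)"
    by (metis append_take_drop_id)
  thus "contains_pseudo_cube (\<lambda>w. rev (map f w)) w"
    unfolding contains_pseudo_cube_def is_factor_def using pc by blast
qed

lemma blk_eq_iff:
  assumes "p + 2*mm \<le> length w"
  shows "blk w p mm 0 = blk w p mm 1 \<longleftrightarrow> (\<forall>s<mm. w!(p+s) = w!(p+mm+s))"
  using assms unfolding blk_def by (auto simp: list_eq_iff_nth_eq add.commute add.left_commute)

lemma blk_phi_iff:
  assumes "p + 2*mm \<le> length w"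
  shows "blk w p mm 0 = rev (map f (blk w p mm 1)) \<longleftrightarrow> (\<forall>s<mm. w!(p+mm-1-s) = f (w!(p+mm+s)))"
proof -
  have "blk w p mm 0 = rev (map f (blk w p mm 1)) \<longleftrightarrow> (\<forall>i<mm. w!(p+i) = f(w!(p+mm+(mm-1-i))))"
    using assms unfolding blk_def by (auto simp: list_eq_iff_nth_eq rev_nth add.commute add.left_commute)
  also have "\<dots> \<longleftrightarrow> (\<forall>s<mm. w!(p+mm-1-s) = f (w!(p+mm+s)))"
  proof
    assume a: "\<forall>i<mm. w!(p+i) = f(w!(p+mm+(mm-1-i)))"
    show "\<forall>s<mm. w!(p+mm-1-s) = f (w!(p+mm+s))"
    proof (intro allI impI)
      fix s assume "s < mm"
      thus "w!(p+mm-1-s) = f (w!(p+mm+s))" using a[rule_format, of "mm-1-s"]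
        by (simp add: Suc_diff_Suc)
    qed
  next
    assume a: "\<forall>s<mm. w!(p+mm-1-s) = f (w!(p+mm+s))"
    show "\<forall>i<mm. w!(p+i) = f(w!(p+mm+(mm-1-i)))"
    proof (intro allI impI)
      fix i assume "i < mm"
      thus "w!(p+i) = f(w!(p+mm+(mm-1-i)))" using a[rule_format, of "mm-1-i"]
        by (simp add: Suc_diff_Suc)
    qed
  qed
  finally show ?thesis .
qed


context mw begin

lemma cnd_iff:
  assumes "p + 3*mm \<le> n"
  shows "cnd p mm \<longleftrightarrow> rel f (blk w p mm 0) (blk w p mm 1) \<and> rel f (blk w p mm 1) (blk w p mm 2)"
proof -
  have L: "length w = n" unfolding n_def ..
  have b1: "blk w p mm 1 = blk w (p+mm) mm 0" "blk w p mm 2 = blk w (p+mm) mm 1"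
    unfolding blk_def by (simp_all add: mult_2 add.assoc)
  have e1: "(\<forall>s<mm. runok mm p s) \<longleftrightarrow> blk w p mm 0 = blk w p mm 1"
    using blk_eq_iff[of p mm w] assms L unfolding runok_def by (auto simp: add.commute add.left_commute)
  have e2: "(\<forall>s<mm. runok mm (p+mm) s) \<longleftrightarrow> blk w (p+mm) mm 0 = blk w (p+mm) mm 1"
    using blk_eq_iff[of "p+mm" mm w] assms L unfolding runok_def by (auto simp: add.commute add.left_commute)
  have f1: "(\<forall>s<mm. okc (p+mm) s) \<longleftrightarrow> blk w p mm 0 = rev (map f (blk w p mm 1))"
    using blk_phi_iff[of p mm w f] assms L unfolding okc_def by auto
  have f2: "(\<forall>s<mm. okc (p+2*mm) s) \<longleftrightarrow> blk w (p+mm) mm 0 = rev (map f (blk w (p+mm) mm 1))"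
    using blk_phi_iff[of "p+mm" mm w f] assms L unfolding okc_def by (auto simp: mult_2 add.assoc)
  show ?thesis unfolding cnd_def rel_def using e1 e2 f1 f2 b1 by auto
qed

lemma ANS_iff: "ANS \<longleftrightarrow> contains_pseudo_cube (\<lambda>w. rev (map f w)) w"
  unfolding pc_char[OF invol] ANS_def using cnd_iff n_def by auto


lemma m00: "m0 0 = n" unfolding m0_def init_mem_def n_def by simp

lemma start0: "spec prog (0, m0) 43 (\<lambda>cf. fst cf = 43 \<and> I1 (snd cf) \<and> snd cf 2 = 0)"
proof (rule spec_ev)
  have h1: "fst (run prog 43 (0, m0)) = 43" using phase0(1)[of m0 n, OF m00 npos] .
  have h2: "let m' = snd (run prog 43 (0, m0)) in m' 0 = 32*n + 15 \<and> m' 1 = 1 \<and> m' 2 = 0 \<and> m' 3 = 32*n \<and> m' 12 = 15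
     \<and> m' 13 = 0 \<and> m' 14 = 32 \<and> (\<forall>i<16. m' (32*n+i) = m0 (i+1)) \<and> (\<forall>a. 16 < a \<longrightarrow> (a < 32*n \<or> 32*n+16 \<le> a) \<longrightarrow> m' a = m0 a)"
    using phase0(2)[of m0 n, OF m00 npos] .
  show "fst (run prog 43 (0, m0)) = 43 \<and> I1 (snd (run prog 43 (0, m0))) \<and> snd (run prog 43 (0, m0)) 2 = 0"
    using h1 h2 unfolding I1_def stash_def frame_def B_def Let_def by simp
qed

lemma full_run:
  "spec prog (0, m0) (43 + ((n+1)*5 + ((9 + (4*length xs + 2)) + ((n+1)*16 + (1 + ((n+2)*(3+((n+1)*17+4)) + (1 + (n+1)*(6 + ((n+1)*20 + (1 + ((n+2)*29 + 2)))))))))))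
     Qfin"
proof (rule spec_seq[OF start0])
  fix c1 :: config assume c1: "fst c1 = 43 \<and> I1 (snd c1) \<and> snd c1 2 = 0"
  obtain m1 where m1: "c1 = (43, m1)" "I1 m1" "m1 2 = 0" using c1 by (cases c1) auto
  show "spec prog c1 ((n+1)*5 + ((9 + (4*length xs + 2)) + ((n+1)*16 + (1 + ((n+2)*(3+((n+1)*17+4)) + (1 + (n+1)*(6 + ((n+1)*20 + (1 + ((n+2)*29 + 2))))))))))
     Qfin"
  proof (rule spec_seq)
    show "spec prog c1 ((n+1)*5) (\<lambda>c. fst c = 48 \<and> I1 (snd c) \<and> snd c 2 = n)"
      unfolding m1(1) using phase1[OF m1(2)] m1(3) by simp
  next
    fix c2 :: config assume c2: "fst c2 = 48 \<and> I1 (snd c2) \<and> snd c2 2 = n"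
    obtain m2 where m2: "c2 = (48, m2)" "I1 m2" "m2 2 = n" using c2 by (cases c2) auto
    show "spec prog c2 ((9 + (4*length xs + 2)) + ((n+1)*16 + (1 + ((n+2)*(3+((n+1)*17+4)) + (1 + (n+1)*(6 + ((n+1)*20 + (1 + ((n+2)*29 + 2)))))))))
     Qfin"
    proof (rule spec_seq)
      show "spec prog c2 (9 + (4*length xs + 2)) (\<lambda>c. fst c = 58 \<and> I2 (snd c) \<and> snd c 9 = 0)"
        unfolding m2(1) by (rule phase1b[OF m2(2,3)])
    next
      fix c3 :: config assume c3: "fst c3 = 58 \<and> I2 (snd c3) \<and> snd c3 9 = 0"
      obtain m3 where m3: "c3 = (58, m3)" "I2 m3" "m3 9 = 0" using c3 by (cases c3) auto
      show "spec prog c3 ((n+1)*16 + (1 + ((n+2)*(3+((n+1)*17+4)) + (1 + (n+1)*(6 + ((n+1)*20 + (1 + ((n+2)*29 + 2))))))))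
        Qfin"
      proof (rule spec_seq)
        show "spec prog c3 ((n+1)*16) (\<lambda>c. fst c = 75 \<and> I2 (snd c) \<and> snd c 9 = n)"
          unfolding m3(1) using phase2[OF m3(2)] m3(3) by simp
      next
        fix c4 :: config assume c4: "fst c4 = 75 \<and> I2 (snd c4) \<and> snd c4 9 = n"
        obtain m4 where m4: "c4 = (75, m4)" "I2 m4" "m4 9 = n" using c4 by (cases c4) auto
        show "spec prog c4 (1 + ((n+2)*(3+((n+1)*17+4)) + (1 + (n+1)*(6 + ((n+1)*20 + (1 + ((n+2)*29 + 2)))))))
          Qfin"
        proof (rule spec_seq)
          show "spec prog c4 1 (\<lambda>c. c = (76, m4(9 := 0)))" unfolding m4(1) by (rule spec_ev) simp
        next
          fix c5 :: config assume c5: "c5 = (76, m4(9 := 0))"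
          have I3: "I3 (m4(9 := 0))" using m4 unfolding I3_def I2_def base_def rads_def by simp
          show "spec prog c5 ((n+2)*(3+((n+1)*17+4)) + (1 + (n+1)*(6 + ((n+1)*20 + (1 + ((n+2)*29 + 2))))))
            Qfin"
          proof (rule spec_seq)
            show "spec prog c5 ((n+2)*(3+((n+1)*17+4))) (\<lambda>cf. fst cf = 102 \<and> base (snd cf) \<and> rads (n+1) (snd cf))"
              unfolding c5 using phase3[OF I3] by simp
          next
            fix c6 :: config assume c6: "fst c6 = 102 \<and> base (snd c6) \<and> rads (n+1) (snd c6)"
            obtain m6 where m6: "c6 = (102, m6)" "base m6" "rads (n+1) m6" using c6 by (cases c6) auto
            show "spec prog c6 (1 + (n+1)*(6 + ((n+1)*20 + (1 + ((n+2)*29 + 2))))) Qfin"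
            proof (rule spec_seq)
              show "spec prog c6 1 (\<lambda>c. c = (103, m6(11 := 1)))" unfolding m6(1) by (rule spec_ev) simp
            next
              fix c7 :: config assume c7: "c7 = (103, m6(11 := 1))"
              have I5: "I5 (m6(11 := 1))" using m6 unfolding I5_def by simp
              show "spec prog c7 ((n+1)*(6 + ((n+1)*20 + (1 + ((n+2)*29 + 2))))) Qfin"
                unfolding c7 using phase5[OF I5] by simp
            qed
          qed
        qed
      qed
    qed
  qed
qed

end



context mach begin

lemma nonempty_ok:
  assumes "w \<noteq> []"
  shows "\<exists>k \<le> 66 * (length w)^2 + 215 * length w + 212 + 4 * length xs.
     halted prog (run prog k (0, init_mem e w)) \<and>
     snd (run prog k (0, init_mem e w)) 0 = (if contains_pseudo_cube (\<lambda>w. rev (map f w)) w then 1 else 0)"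
proof -
  interpret mw e f xs w using assms by unfold_locales
  have sp: "spec prog (0, m0) (43 + ((n+1)*5 + ((9 + (4*length xs + 2)) + ((n+1)*16 + (1 + ((n+2)*(3+((n+1)*17+4)) + (1 + (n+1)*(6 + ((n+1)*20 + (1 + ((n+2)*29 + 2)))))))))))
     Qfin" by (rule full_run)
  have eqT: "43 + ((n+1)*5 + ((9 + (4*length xs + 2)) + ((n+1)*16 + (1 + ((n+2)*(3+((n+1)*17+4)) + (1 + (n+1)*(6 + ((n+1)*20 + (1 + ((n+2)*29 + 2))))))))))
     = 66 * n^2 + 215 * n + 212 + 4 * length xs"
    by (simp add: power2_eq_square distrib_left distrib_right)
  obtain k where k: "k \<le> 66 * n^2 + 215 * n + 212 + 4 * length xs" "Qfin (run prog k (0, m0))"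
    using sp unfolding spec_def eqT by blast
  have h: "prog ! 166 = Halt" using prog_nth[of 166] by simp
  have hl: "166 < length prog" by (simp add: len_prog)
  show ?thesis
    apply (rule exI[of _ k])
    using k h hl ANS_iff unfolding Qfin_def halted_def m0_def n_def by simp
qed

lemma empty_ok:
  "halted prog (run prog 1 (0, init_mem e [])) \<and>
     snd (run prog 1 (0, init_mem e [])) 0 = (if contains_pseudo_cube (\<lambda>w. rev (map f w)) [] then 1 else 0)"
proof -
  have np: "\<not> contains_pseudo_cube (\<lambda>w. rev (map f w)) []"
    unfolding contains_pseudo_cube_def is_factor_def pseudo_cube_def by auto
  have h: "prog ! 166 = Halt" using prog_nth[of 166] by simp
  have hl: "166 < length prog" by (simp add: len_prog)
  show ?thesis using np h hl by (simp add: init_mem_def halted_def)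
qed

lemma decides:
  "decides_in_time prog e (contains_pseudo_cube (\<lambda>w. rev (map f w))) (\<lambda>n. (500 + 4 * length xs) * n ^ 2 + (500 + 4 * length xs))"
  unfolding decides_in_time_def
proof
  fix w :: "'a list"
  show "\<exists>k \<le> (500 + 4 * length xs) * (length w) ^ 2 + (500 + 4 * length xs).
        halted prog (run prog k (0, init_mem e w)) \<and>
        snd (run prog k (0, init_mem e w)) 0 = (if contains_pseudo_cube (\<lambda>w. rev (map f w)) w then 1 else 0)"
  proof (cases "w = []")
    case True
    have "1 \<le> (500 + 4 * length xs) * (length w)^2 + (500 + 4 * length xs)" by simp
    thus ?thesis using empty_ok True by blast
  next
    case False
    obtain k where k: "k \<le> 66 * (length w)^2 + 215 * length w + 212 + 4 * length xs"
      "halted prog (run prog k (0, init_mem e w)) \<and>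
       snd (run prog k (0, init_mem e w)) 0 = (if contains_pseudo_cube (\<lambda>w. rev (map f w)) w then 1 else 0)"
      using nonempty_ok[OF False] by blast
    have nn: "length w \<le> (length w)^2" by (cases "length w") (auto simp: power2_eq_square)
    have "66 * (length w)^2 + 215 * length w + 212 + 4 * length xs \<le> (500 + 4 * length xs) * (length w) ^ 2 + (500 + 4 * length xs)"
      using nn by (simp add: distrib_right)
    thus ?thesis using k by (intro exI[of _ k]) simp
  qed
qed

end

theorem mainTheorem6:
  fixes \<phi> :: "('a::finite) list \<Rightarrow> 'a list"
    and e :: "'a \<Rightarrow> nat"
  assumes "antimorphic_involution \<phi>"
    and "inj e"
  shows "\<exists>P c. decides_in_time P e (contains_pseudo_cube \<phi>) (\<lambda>n. c * n ^ 2 + c)"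
proof -
  obtain xs :: "'a list" where xs: "set xs = UNIV" using finite_list[OF finite_UNIV] by blast
  define f where "f = (\<lambda>a. hd (\<phi> [a]))"
  have inv: "\<And>a. f (f a) = a" unfolding f_def using phi_f_invol[OF assms(1)] by simp
  interpret mach e f xs using assms(2) xs inv by unfold_locales
  have phi: "\<phi> = (\<lambda>w. rev (map f w))" unfolding f_def by (intro ext) (rule phi_rev_map[OF assms(1)])
  show ?thesis using decides unfolding phi by blast
qed


end
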